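(* Let $\mathcal{G}$ be a finite connected undirected simple graph with vertices $1,\dots,N$ and let $Z,Z'\in\mathbf{Z}^N$. Then $\Phi_h(K,\mathcal{G},Z)=\Phi_h(K,\mathcal{G},Z')$ for every integer $K\ge 2$ and every $K$-harmonic function $h$ on $\mathcal{G}$ if and only if there exists an integer vector $U\in\mathbf{Z}^N$ with $Z'=Z+\nabla^2 U$. Consequently a map $\eta:\mathbf{Z}^N\to\mathbf{Z}^N$ is isoinvariant if and only if for every $Z$ one has $\eta(Z)=Z+\nabla^2U$ for some $U\in\mathbf{Z}^N$ (depending on $Z$).
   Context: $d_i$ is the degree of vertex $i$; the Laplacian $\nabla^2$ is the $N\times N$ integer matrix with $\nabla^2_{ii}=d_i$, $\nabla^2_{ij}=-1$ if $i\sim j$ (adjacent), $0$ otherwise. $\mathbf{Z}_K=\{0,\dots,K-1\}$. A function $h:\{1,\dots,N\}\to\mathbf{Z}_K$ is $K$-harmonic if $(\nabla^2 h)(i)\equiv 0\pmod K$ for all $i$. For a configuration $Z=(z(1),\dots,z(N))\in\mathbf{Z}^N$, $\Phi_h(K,\mathcal{G},Z)=\left(\sum_i h(i)z(i)\right)\bmod K$. A map $\eta:\mathbf{Z}^N\to\mathbf{Z}^N$ is called isoinvariant if $\Phi_h(K,\mathcal{G},\eta(Z))=\Phi_h(K,\mathcal{G},Z)$ for all $Z$, all integers $K\ge2$ and all $K$-harmonic $h$. *)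

theory Defs
  imports Main
begin

definition simple_graph :: "nat \<Rightarrow> (nat \<Rightarrow> nat \<Rightarrow> bool) \<Rightarrow> bool" where
  "simple_graph N E \<longleftrightarrow>
     (\<forall>i j. E i j \<longrightarrow> i \<in> {1..N} \<and> j \<in> {1..N}) \<and>
     (\<forall>i j. E i j \<longrightarrow> E j i) \<and> (\<forall>i. \<not> E i i)"

definition connected_graph :: "nat \<Rightarrow> (nat \<Rightarrow> nat \<Rightarrow> bool) \<Rightarrow> bool" where
  "connected_graph N E \<longleftrightarrow> (\<forall>i\<in>{1..N}. \<forall>j\<in>{1..N}. E\<^sup>*\<^sup>* i j)"

definition degree :: "nat \<Rightarrow> (nat \<Rightarrow> nat \<Rightarrow> bool) \<Rightarrow> nat \<Rightarrow> nat" where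
  "degree N E i = card {j \<in> {1..N}. E i j}"

definition laplacian :: "nat \<Rightarrow> (nat \<Rightarrow> nat \<Rightarrow> bool) \<Rightarrow> (nat \<Rightarrow> int) \<Rightarrow> nat \<Rightarrow> int" where
  "laplacian N E U i = int (degree N E i) * U i - (\<Sum>j\<in>{j \<in> {1..N}. E i j}. U j)"

definition K_harmonic :: "nat \<Rightarrow> (nat \<Rightarrow> nat \<Rightarrow> bool) \<Rightarrow> int \<Rightarrow> (nat \<Rightarrow> int) \<Rightarrow> bool" where
  "K_harmonic N E K h \<longleftrightarrow>
     (\<forall>i\<in>{1..N}. 0 \<le> h i \<and> h i < K) \<and>
     (\<forall>i\<in>{1..N}. laplacian N E h i mod K = 0)"

definition Phi :: "nat \<Rightarrow> (nat \<Rightarrow> int) \<Rightarrow> int \<Rightarrow> (nat \<Rightarrow> int) \<Rightarrow> int" where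
  "Phi N h K Z = (\<Sum>i=1..N. h i * Z i) mod K"

definition isoinvariant :: "nat \<Rightarrow> (nat \<Rightarrow> nat \<Rightarrow> bool) \<Rightarrow> ((nat \<Rightarrow> int) \<Rightarrow> (nat \<Rightarrow> int)) \<Rightarrow> bool" where
  "isoinvariant N E \<eta> \<longleftrightarrow>
     (\<forall>Z K h. K \<ge> 2 \<longrightarrow> K_harmonic N E K h \<longrightarrow> Phi N h K (\<eta> Z) = Phi N h K Z)"

end

theory Submission
  imports Defs "Jordan_Normal_Form.Determinant"
begin

lemma shift1: "(\<Sum>k=1..n. f k) = (\<Sum>k<n. f (Suc k))"
  using sum.atLeast1_atMost_eq[of f n] by simp

lemma adj_facts:
  fixes a :: "nat \<Rightarrow> nat \<Rightarrow> int" and n :: nat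
  shows "\<exists>B D. (\<forall>i\<in>{1..n}. \<forall>j\<in>{1..n}. (\<Sum>k=1..n. B i k * a k j) = (if i = j then D else 0))
     \<and> (\<forall>i\<in>{1..n}. \<forall>j\<in>{1..n}. (\<Sum>k=1..n. a i k * B k j) = (if i = j then D else 0))
     \<and> (D = 0 \<longrightarrow> (\<exists>v. (\<exists>i\<in>{1..n}. v i \<noteq> 0) \<and> (\<forall>i\<in>{1..n}. (\<Sum>k=1..n. a i k * v k) = 0)))"
proof -
  define A where "A = mat n n (\<lambda>(i,j). a (Suc i) (Suc j))"
  have A: "A \<in> carrier_mat n n" unfolding A_def by simp
  define B where "B = (\<lambda>i j. if i \<ge> 1 \<and> j \<ge> 1 then adj_mat A $$ (i - 1, j - 1) else 0)"
  note adj = adj_mat[OF A]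
  have dims: "dim_row (adj_mat A) = n" "dim_col (adj_mat A) = n" "dim_row A = n" "dim_col A = n"
    using adj(1) A by auto
  have 1: "(\<Sum>k=1..n. B i k * a k j) = (if i = j then det A else 0)" if "i\<in>{1..n}" "j\<in>{1..n}" for i j
  proof -
    have "(adj_mat A * A) $$ (i-1, j-1) = (\<Sum>k<n. adj_mat A $$ (i-1, k) * A $$ (k, j-1))"
      using that by (auto simp: dims scalar_prod_def atLeast0LessThan[symmetric] intro!: sum.cong)
    also have "\<dots> = (\<Sum>k=1..n. B i k * a k j)"
      unfolding shift1 using that by (intro sum.cong) (auto simp: B_def A_def)
    finally show ?thesis using adj that by (auto split: if_splits)
  qed
  have 2: "(\<Sum>k=1..n. a i k * B k j) = (if i = j then det A else 0)" if "i\<in>{1..n}" "j\<in>{1..n}" for i j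
  proof -
    have "(A * adj_mat A) $$ (i-1, j-1) = (\<Sum>k<n. A $$ (i-1, k) * adj_mat A $$ (k, j-1))"
      using that by (auto simp: dims scalar_prod_def atLeast0LessThan[symmetric] intro!: sum.cong)
    also have "\<dots> = (\<Sum>k=1..n. a i k * B k j)"
      unfolding shift1 using that by (intro sum.cong) (auto simp: B_def A_def)
    finally show ?thesis using adj that by (auto split: if_splits)
  qed
  have 3: "\<exists>v. (\<exists>i\<in>{1..n}. v i \<noteq> 0) \<and> (\<forall>i\<in>{1..n}. (\<Sum>k=1..n. a i k * v k) = 0)" if "det A = 0"
  proof -
    from that det_0_iff_vec_prod_zero[OF A] obtain w where w: "w \<in> carrier_vec n" "w \<noteq> 0\<^sub>v n" "A *\<^sub>v w = 0\<^sub>v n" by auto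
    define v where "v = (\<lambda>i. if i \<ge> 1 then w $ (i - 1) else 0)"
    from w obtain i0 where i0: "i0 < n" "w $ i0 \<noteq> 0" by (metis eq_vecI carrier_vecD index_zero_vec)
    have "\<exists>i\<in>{1..n}. v i \<noteq> 0" using i0 by (intro bexI[of _ "Suc i0"]) (auto simp: v_def)
    moreover have "(\<Sum>k=1..n. a i k * v k) = 0" if "i\<in>{1..n}" for i
    proof -
      have "(A *\<^sub>v w) $ (i-1) = (\<Sum>k<n. A $$ (i-1, k) * w $ k)"
        using that w(1) by (auto simp: dims scalar_prod_def atLeast0LessThan[symmetric] intro!: sum.cong)
      also have "\<dots> = (\<Sum>k=1..n. a i k * v k)"
        unfolding shift1 using that by (intro sum.cong) (auto simp: v_def A_def)
      finally show ?thesis using w that by auto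
    qed
    ultimately show ?thesis by blast
  qed
  show ?thesis using 1 2 3 by blast
qed
definition Lent :: "nat \<Rightarrow> (nat \<Rightarrow> nat \<Rightarrow> bool) \<Rightarrow> nat \<Rightarrow> nat \<Rightarrow> int" where
  "Lent N E i j = (if i = j then int (Defs.degree N E i) else if E i j then -1 else 0)"

lemma lap_sum:
  assumes sg: "simple_graph N E" and i: "i \<in> {1..N}"
  shows "laplacian N E U i = (\<Sum>j=1..N. Lent N E i j * U j)"
proof -
  have nE: "\<not> E i i" using sg unfolding simple_graph_def by auto
  have "(\<Sum>j=1..N. Lent N E i j * U j)
     = (\<Sum>j=1..N. (if j = i then int (Defs.degree N E i) * U i else 0) + (if E i j then - U j else 0))"
    using nE by (intro sum.cong) (auto simp: Lent_def)
  also have "\<dots> = int (Defs.degree N E i) * U i + (\<Sum>j=1..N. if E i j then - U j else 0)"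
    using i by (simp add: sum.distrib)
  also have "(\<Sum>j=1..N. if E i j then - U j else 0) = (\<Sum>j\<in>{j \<in> {1..N}. E i j}. - U j)"
    using sum.inter_filter[of "{1..N}" "\<lambda>j. - U j" "E i"] by simp
  finally show ?thesis unfolding laplacian_def by (simp add: sum_negf)
qed

lemma Lent_sym: "simple_graph N E \<Longrightarrow> Lent N E i j = Lent N E j i"
  unfolding simple_graph_def Lent_def by auto

lemma lap_const: "laplacian N E (\<lambda>_. c) i = 0"
  unfolding laplacian_def Defs.degree_def by simp

lemma colsum:
  assumes sg: "simple_graph N E" and j: "j \<in> {1..N}"
  shows "(\<Sum>i=1..N. Lent N E i j) = 0"
proof -
  have "(\<Sum>i=1..N. Lent N E i j) = (\<Sum>i=1..N. Lent N E j i * 1)"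
    using Lent_sym[OF sg] by simp
  also have "\<dots> = laplacian N E (\<lambda>_. 1) j" using lap_sum[OF sg j] by simp
  finally show ?thesis by (simp add: lap_const)
qed

lemma lap_total:
  assumes sg: "simple_graph N E"
  shows "(\<Sum>i=1..N. laplacian N E V i) = 0"
proof -
  have "(\<Sum>i=1..N. laplacian N E V i) = (\<Sum>i=1..N. \<Sum>j=1..N. Lent N E i j * V j)"
    using lap_sum[OF sg] by simp
  also have "\<dots> = (\<Sum>j=1..N. (\<Sum>i=1..N. Lent N E i j) * V j)"
    by (subst sum.swap) (simp add: sum_distrib_right)
  also have "\<dots> = 0" using colsum[OF sg] by simp
  finally show ?thesis .
qed

lemma lap_pair:
  assumes sg: "simple_graph N E"
  shows "(\<Sum>i=1..N. h i * laplacian N E U i) = (\<Sum>j=1..N. U j * laplacian N E h j)"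
proof -
  have "(\<Sum>i=1..N. h i * laplacian N E U i) = (\<Sum>i=1..N. \<Sum>j=1..N. h i * (Lent N E i j * U j))"
    using lap_sum[OF sg] by (simp add: sum_distrib_left)
  also have "\<dots> = (\<Sum>j=1..N. \<Sum>i=1..N. U j * (Lent N E j i * h i))"
    by (subst sum.swap) (simp add: Lent_sym[OF sg] mult_ac)
  also have "\<dots> = (\<Sum>j=1..N. U j * laplacian N E h j)"
    using lap_sum[OF sg] by (simp add: sum_distrib_left)
  finally show ?thesis .
qed

lemma maxprin:
  assumes sg: "simple_graph N E" and conn: "connected_graph N E" and N: "N \<ge> 1"
    and harm: "\<forall>i\<in>{1..N}. laplacian N E V i = 0"
  shows "\<forall>i\<in>{1..N}. V i = V N"
proof -
  define M where "M = Max (V ` {1..N})"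
  have fin: "finite (V ` {1..N})" "V ` {1..N} \<noteq> {}" using N by auto
  obtain i0 where i0: "i0 \<in> {1..N}" "V i0 = M" using Max_in[OF fin] unfolding M_def by auto
  have le: "V k \<le> M" if "k \<in> {1..N}" for k using Max_ge[OF fin(1)] that unfolding M_def by auto
  have stp: "V z = M" if y: "y \<in> {1..N}" "V y = M" and yz: "E y z" for y z
  proof -
    let ?S = "{j \<in> {1..N}. E y j}"
    have z: "z \<in> {1..N}" using sg yz unfolding simple_graph_def by auto
    have "laplacian N E V y = (\<Sum>k\<in>?S. M - V k)"
      unfolding laplacian_def Defs.degree_def using y by (simp add: sum_subtractf)
    then have "(\<Sum>k\<in>?S. M - V k) = 0" using harm y by auto
    moreover have "\<forall>k\<in>?S. 0 \<le> M - V k" using le by auto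
    ultimately have "\<forall>k\<in>?S. M - V k = 0" using sum_nonneg_eq_0_iff[of ?S "\<lambda>k. M - V k"] by auto
    then show ?thesis using z yz by auto
  qed
  have reach: "E\<^sup>*\<^sup>* i0 j \<Longrightarrow> V j = M \<and> j \<in> {1..N}" for j
  proof (induction rule: rtranclp_induct)
    case base then show ?case using i0 by auto
  next
    case (step y z)
    then have "V y = M" "y \<in> {1..N}" by auto
    then show ?case using stp[of y z] step.hyps(2) sg unfolding simple_graph_def by auto
  qed
  have "V j = M" if "j \<in> {1..N}" for j
    using reach conn i0(1) that unfolding connected_graph_def by blast
  then show ?thesis using N by auto
qed

lemma lap_ext:
  assumes sg: "simple_graph (Suc n) E" and i: "i \<in> {1..Suc n}" and V: "V (Suc n) = 0"
  shows "laplacian (Suc n) E V i = (\<Sum>k=1..n. Lent (Suc n) E i k * V k)"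
  using lap_sum[OF sg i, of V] V by simp

lemma lap_last:
  assumes sg: "simple_graph (Suc n) E"
  shows "laplacian (Suc n) E V (Suc n) = - (\<Sum>i=1..n. laplacian (Suc n) E V i)"
  using lap_total[OF sg, of V] by simp

lemma hard:
  assumes sg: "simple_graph N E" and conn: "connected_graph N E"
    and H: "\<forall>K h. K \<ge> 2 \<longrightarrow> (\<forall>i\<in>{1..N}. K dvd laplacian N E h i) \<longrightarrow> K dvd (\<Sum>i=1..N. h i * d i)"
  shows "\<exists>U. \<forall>i\<in>{1..N}. d i = laplacian N E U i"
proof (cases N)
  case 0 then show ?thesis by auto
next
  case (Suc n)
  define s where "s = (\<Sum>i=1..N. d i)"
  have s0: "s = 0"
  proof (rule ccontr)
    assume "s \<noteq> 0"
    have "(\<bar>s\<bar> + 2) dvd (\<Sum>i=1..N. 1 * d i)"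
      using H[rule_format, of "\<bar>s\<bar> + 2" "\<lambda>_. 1"] by (simp add: lap_const)
    then have "(\<bar>s\<bar> + 2) dvd s" unfolding s_def by simp
    from dvd_imp_le_int[OF \<open>s \<noteq> 0\<close> this] show False by simp
  qed
  obtain B D where BD1: "\<forall>i\<in>{1..n}. \<forall>j\<in>{1..n}. (\<Sum>k=1..n. B i k * Lent N E k j) = (if i = j then D else 0)"
     and BD2: "\<forall>i\<in>{1..n}. \<forall>j\<in>{1..n}. (\<Sum>k=1..n. Lent N E i k * B k j) = (if i = j then D else 0)"
     and BD3: "D = 0 \<longrightarrow> (\<exists>v. (\<exists>i\<in>{1..n}. v i \<noteq> 0) \<and> (\<forall>i\<in>{1..n}. (\<Sum>k=1..n. Lent N E i k * v k) = 0))"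
    using adj_facts[of n "Lent N E"] by blast
  have sg': "simple_graph (Suc n) E" using sg Suc by simp
  have D0: "D \<noteq> 0"
  proof
    assume "D = 0"
    with BD3 obtain v where v1: "\<exists>i\<in>{1..n}. v i \<noteq> 0" and v2: "\<forall>i\<in>{1..n}. (\<Sum>k=1..n. Lent N E i k * v k) = 0"
      by blast
    define V where "V = (\<lambda>k. if k \<le> n then v k else 0)"
    have V0: "V (Suc n) = 0" unfolding V_def by simp
    have h1: "laplacian N E V i = 0" if "i \<in> {1..n}" for i
    proof -
      have "laplacian N E V i = (\<Sum>k=1..n. Lent N E i k * V k)"
        using lap_ext[of n E i V, OF sg' _ V0] that Suc by simp
      also have "\<dots> = (\<Sum>k=1..n. Lent N E i k * v k)" by (intro sum.cong) (auto simp: V_def)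
      finally show ?thesis using v2 that by simp
    qed
    have "laplacian N E V N = 0" using lap_last[OF sg', of V] h1 Suc by simp
    then have "\<forall>i\<in>{1..N}. laplacian N E V i = 0" using h1 Suc by (auto simp: le_Suc_eq)
    from maxprin[OF sg conn _ this] Suc have "\<forall>i\<in>{1..N}. V i = 0" using V0 by simp
    then show False using v1 Suc unfolding V_def by force
  qed
  define w where "w = (\<lambda>i. \<Sum>k=1..n. B i k * d k)"
  show ?thesis
  proof (cases "\<forall>i\<in>{1..n}. D dvd w i")
    case True
    define U where "U = (\<lambda>k. if k \<le> n then w k div D else 0)"
    have U0: "U (Suc n) = 0" unfolding U_def by simp
    have u1: "laplacian N E U i = d i" if i: "i \<in> {1..n}" for i
    proof -
      have "D * laplacian N E U i = D * (\<Sum>k=1..n. Lent N E i k * U k)"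
        using lap_ext[of n E i U, OF sg' _ U0] that Suc by simp
      also have "\<dots> = (\<Sum>k=1..n. Lent N E i k * w k)"
        unfolding sum_distrib_left using True
        by (intro sum.cong) (auto simp: U_def mult_ac)
      also have "\<dots> = (\<Sum>k=1..n. \<Sum>l=1..n. Lent N E i k * B k l * d l)"
        unfolding w_def by (simp add: sum_distrib_left mult_ac)
      also have "\<dots> = (\<Sum>l=1..n. (\<Sum>k=1..n. Lent N E i k * B k l) * d l)"
        by (subst sum.swap) (simp add: sum_distrib_right)
      also have "\<dots> = (\<Sum>l=1..n. (if i = l then D else 0) * d l)"
        using BD2 i by (intro sum.cong) auto
      also have "\<dots> = (\<Sum>l=1..n. if l = i then D * d i else 0)" by (intro sum.cong) auto
      also have "\<dots> = D * d i" using i by simp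
      finally show ?thesis using D0 by simp
    qed
    have "laplacian N E U N = - (\<Sum>i=1..n. d i)" using lap_last[OF sg', of U] u1 Suc by simp
    also have "\<dots> = d N" using s0 Suc unfolding s_def by simp
    finally have "\<forall>i\<in>{1..N}. d i = laplacian N E U i" using u1 Suc by (auto simp: le_Suc_eq)
    then show ?thesis by blast
  next
    case False
    then obtain i0 where i0: "i0 \<in> {1..n}" "\<not> D dvd w i0" by blast
    define h where "h = (\<lambda>k. if k \<le> n then B i0 k else 0)"
    have h0: "h (Suc n) = 0" unfolding h_def by simp
    have hj: "laplacian N E h j = (if i0 = j then D else 0)" if j: "j \<in> {1..n}" for j
    proof -
      have "laplacian N E h j = (\<Sum>k=1..n. Lent N E j k * h k)"
        using lap_ext[of n E j h, OF sg' _ h0] that Suc by simp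
      also have "\<dots> = (\<Sum>k=1..n. B i0 k * Lent N E k j)"
        using Lent_sym[OF sg] by (intro sum.cong) (auto simp: h_def mult_ac)
      finally show ?thesis using BD1 i0 j by simp
    qed
    have dv1: "D dvd laplacian N E h j" if "j \<in> {1..n}" for j using hj[OF that] by simp
    have "D dvd (\<Sum>i=1..n. laplacian N E h i)" using dv1 by (intro dvd_sum) auto
    then have "D dvd laplacian N E h N" using lap_last[OF sg', of h] Suc by simp
    then have dvall: "\<forall>j\<in>{1..N}. \<bar>D\<bar> dvd laplacian N E h j" using dv1 Suc by (auto simp: le_Suc_eq)
    have K2: "\<bar>D\<bar> \<ge> 2"
    proof (rule ccontr)
      assume "\<not> \<bar>D\<bar> \<ge> 2"
      then have "\<bar>D\<bar> = 1" using D0 by linarith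
      then have "D dvd w i0" by (metis abs_dvd_iff one_dvd)
      then show False using i0 by simp
    qed
    have "\<bar>D\<bar> dvd (\<Sum>i=1..N. h i * d i)" using H K2 dvall by blast
    moreover have "(\<Sum>i=1..N. h i * d i) = w i0"
      unfolding w_def using Suc h0 by (simp add: h_def)
    ultimately have False using i0 by simp
    then show ?thesis by simp
  qed
qed

lemma modcong:
  fixes K :: int
  assumes "\<forall>j\<in>A. f j mod K = g j mod K"
  shows "sum f A mod K = sum g A mod K"
  by (metis (no_types, lifting) assms mod_sum_eq sum.cong)

lemma part1:
  assumes sg: "simple_graph N E" and conn: "connected_graph N E"
  shows "(\<forall>K h. K \<ge> 2 \<longrightarrow> K_harmonic N E K h \<longrightarrow> Phi N h K Z = Phi N h K Z')
            \<longleftrightarrow> (\<exists>U :: nat \<Rightarrow> int. \<forall>i\<in>{1..N}. Z' i = Z i + laplacian N E U i)"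
proof
  assume A: "\<forall>K h. K \<ge> 2 \<longrightarrow> K_harmonic N E K h \<longrightarrow> Phi N h K Z = Phi N h K Z'"
  define d where "d = (\<lambda>i. Z' i - Z i)"
  have H: "\<forall>K h. K \<ge> 2 \<longrightarrow> (\<forall>i\<in>{1..N}. K dvd laplacian N E h i) \<longrightarrow> K dvd (\<Sum>i=1..N. h i * d i)"
  proof (intro allI impI)
    fix K :: int and h
    assume K: "K \<ge> 2" and dv: "\<forall>i\<in>{1..N}. K dvd laplacian N E h i"
    define h' where "h' = (\<lambda>i. h i mod K)"
    have "laplacian N E h' i mod K = 0" if i: "i \<in> {1..N}" for i
    proof -
      have "laplacian N E h' i mod K = (\<Sum>j=1..N. Lent N E i j * h' j) mod K" using lap_sum[OF sg i] by simp
      also have "\<dots> = (\<Sum>j=1..N. Lent N E i j * h j) mod K"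
        by (rule modcong) (auto simp: h'_def mod_mult_right_eq)
      also have "\<dots> = laplacian N E h i mod K" using lap_sum[OF sg i] by simp
      finally show ?thesis using dv i by simp
    qed
    moreover have "\<forall>i\<in>{1..N}. 0 \<le> h' i \<and> h' i < K" using K unfolding h'_def by auto
    ultimately have "K_harmonic N E K h'" unfolding K_harmonic_def by auto
    then have "Phi N h' K Z = Phi N h' K Z'" using A K by blast
    moreover have "Phi N h' K Y = (\<Sum>i=1..N. h i * Y i) mod K" for Y
      unfolding Phi_def by (rule modcong) (auto simp: h'_def mod_mult_left_eq)
    ultimately have "(\<Sum>i=1..N. h i * Z' i) mod K = (\<Sum>i=1..N. h i * Z i) mod K" by simp
    then have "K dvd (\<Sum>i=1..N. h i * Z' i) - (\<Sum>i=1..N. h i * Z i)" using mod_eq_dvd_iff by blast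
    moreover have "(\<Sum>i=1..N. h i * Z' i) - (\<Sum>i=1..N. h i * Z i) = (\<Sum>i=1..N. h i * d i)"
      unfolding d_def by (simp add: sum_subtractf right_diff_distrib)
    ultimately show "K dvd (\<Sum>i=1..N. h i * d i)" by simp
  qed
  from hard[OF sg conn H] obtain U where "\<forall>i\<in>{1..N}. d i = laplacian N E U i" by blast
  then show "\<exists>U :: nat \<Rightarrow> int. \<forall>i\<in>{1..N}. Z' i = Z i + laplacian N E U i"
    unfolding d_def by (intro exI[of _ U]) auto
next
  assume "\<exists>U :: nat \<Rightarrow> int. \<forall>i\<in>{1..N}. Z' i = Z i + laplacian N E U i"
  then obtain U where U: "\<forall>i\<in>{1..N}. Z' i = Z i + laplacian N E U i" by blast
  show "\<forall>K h. K \<ge> 2 \<longrightarrow> K_harmonic N E K h \<longrightarrow> Phi N h K Z = Phi N h K Z'"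
  proof (intro allI impI)
    fix K :: int and h
    assume "K_harmonic N E K h"
    then have dv: "\<forall>j\<in>{1..N}. K dvd laplacian N E h j" unfolding K_harmonic_def by auto
    have "(\<Sum>i=1..N. h i * Z' i) = (\<Sum>i=1..N. h i * Z i) + (\<Sum>i=1..N. h i * laplacian N E U i)"
      using U by (simp add: sum.distrib[symmetric] distrib_left)
    also have "(\<Sum>i=1..N. h i * laplacian N E U i) = (\<Sum>j=1..N. U j * laplacian N E h j)"
      by (rule lap_pair[OF sg])
    finally have eq: "(\<Sum>i=1..N. h i * Z' i) = (\<Sum>i=1..N. h i * Z i) + (\<Sum>j=1..N. U j * laplacian N E h j)" .
    have "K dvd (\<Sum>j=1..N. U j * laplacian N E h j)" using dv by (intro dvd_sum) auto
    then show "Phi N h K Z = Phi N h K Z'" unfolding Phi_def eq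
      by (metis add_0_right dvd_imp_mod_0 mod_add_right_eq)
  qed
qed

theorem theorem2:
  fixes N :: nat and E :: "nat \<Rightarrow> nat \<Rightarrow> bool"
  assumes "simple_graph N E" and "connected_graph N E"
  shows "(\<forall>Z Z' :: nat \<Rightarrow> int.
            (\<forall>K h. K \<ge> 2 \<longrightarrow> K_harmonic N E K h \<longrightarrow> Phi N h K Z = Phi N h K Z')
            \<longleftrightarrow> (\<exists>U :: nat \<Rightarrow> int. \<forall>i\<in>{1..N}. Z' i = Z i + laplacian N E U i))
       \<and> (\<forall>\<eta>. isoinvariant N E \<eta> \<longleftrightarrow>
            (\<forall>Z. \<exists>U :: nat \<Rightarrow> int. \<forall>i\<in>{1..N}. \<eta> Z i = Z i + laplacian N E U i))"
proof -
  note P = part1[OF assms]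
  have "isoinvariant N E \<eta> \<longleftrightarrow>
            (\<forall>Z. \<exists>U :: nat \<Rightarrow> int. \<forall>i\<in>{1..N}. \<eta> Z i = Z i + laplacian N E U i)" for \<eta>
  proof -
    have "isoinvariant N E \<eta> \<longleftrightarrow>
       (\<forall>Z. \<forall>K h. K \<ge> 2 \<longrightarrow> K_harmonic N E K h \<longrightarrow> Phi N h K Z = Phi N h K (\<eta> Z))"
      unfolding isoinvariant_def by metis
    also have "\<dots> \<longleftrightarrow> (\<forall>Z. \<exists>U :: nat \<Rightarrow> int. \<forall>i\<in>{1..N}. \<eta> Z i = Z i + laplacian N E U i)"
      using P by blast
    finally show ?thesis .
  qed
  then show ?thesis using P by blast
qed

end
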